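(* Let $X$ be a compact metric space and let $f\colon X\to X$ be an inner-distal homeomorphism. If every proximal cell $\mathcal{P}(x)$, $x\in X$, is a meagre subset of $X$, then the set of almost periodic points of $f$ is uncountable and $f$ has uncountably many stable classes.
   Context: The proximal cell of $x$ is $\mathcal{P}(x)=\{y\in X\colon \inf_{n\in\mathbb{Z}} d(f^n(x),f^n(y))=0\}$; $f$ is inner-distal if $\operatorname{Int}\mathcal{P}(x)=\emptyset$ for all $x$. A set is meagre if it is a countable union of nowhere-dense sets (sets whose closure has empty interior). A set $A\subseteq\mathbb{Z}$ is syndetic if $A+F=\mathbb{Z}$ for some finite $F\subseteq\mathbb{Z}$. A point $x$ is (pointwise) almost periodic if for every open neighborhood $U$ of $x$ the set $\{n\in\mathbb{Z}\colon f^n(x)\in U\}$ is syndetic. A stable class is a set of the form $W^s(x)=\{y\in X\colon \lim_{n\to\infty}d(f^n(x),f^n(y))=0\}$ for some $x\in X$. *)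

theory Defs
  imports "HOL-Analysis.Analysis"
begin

definition zit :: "('a \<Rightarrow> 'a) \<Rightarrow> int \<Rightarrow> 'a \<Rightarrow> 'a" where
  "zit f n = (if 0 \<le> n then f ^^ nat n else inv f ^^ nat (- n))"

definition proximal_cell :: "('a::metric_space \<Rightarrow> 'a) \<Rightarrow> 'a \<Rightarrow> 'a set" where
  "proximal_cell f x = {y. (INF n\<in>(UNIV::int set). dist (zit f n x) (zit f n y)) = 0}"

definition inner_distal :: "('a::metric_space \<Rightarrow> 'a) \<Rightarrow> bool" where
  "inner_distal f \<longleftrightarrow> (\<forall>x. interior (proximal_cell f x) = {})"

definition nowhere_dense :: "'a::topological_space set \<Rightarrow> bool" where
  "nowhere_dense A \<longleftrightarrow> interior (closure A) = {}"

definition meagre :: "'a::topological_space set \<Rightarrow> bool" where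
  "meagre A \<longleftrightarrow> (\<exists>\<N>. countable \<N> \<and> (\<forall>N\<in>\<N>. nowhere_dense N) \<and> A = \<Union>\<N>)"

definition syndetic :: "int set \<Rightarrow> bool" where
  "syndetic A \<longleftrightarrow> (\<exists>F. finite F \<and> {a + b | a b. a \<in> A \<and> b \<in> F} = UNIV)"

definition almost_periodic :: "('a::topological_space \<Rightarrow> 'a) \<Rightarrow> 'a \<Rightarrow> bool" where
  "almost_periodic f x \<longleftrightarrow> (\<forall>U. open U \<and> x \<in> U \<longrightarrow> syndetic {n. zit f n x \<in> U})"

definition stable_class :: "('a::metric_space \<Rightarrow> 'a) \<Rightarrow> 'a \<Rightarrow> 'a set" where
  "stable_class f x = {y. ((\<lambda>n. dist ((f ^^ n) x) ((f ^^ n) y)) \<longlonglongrightarrow> 0)}"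

end

theory Submission imports Defs begin

lemma inv_eq: assumes h: "homeomorphism UNIV UNIV f g" shows "inv f = g"
proof -
  have "\<And>x. g (f x) = x" "\<And>y. f (g y) = y" using h by (auto simp: homeomorphism_def)
  then show ?thesis by (metis inv_equality ext)
qed

lemma zit_succ: assumes h: "homeomorphism UNIV UNIV f g"
  shows "zit f (n+1) x = f (zit f n x)"
proof -
  have fg: "\<And>y. f (g y) = y" using h by (auto simp: homeomorphism_def)
  show ?thesis
  proof (cases "0 \<le> n")
    case True
    then have "nat (n+1) = Suc (nat n)" by simp
    then show ?thesis using True by (simp add: zit_def)
  next
    case False
    then have "nat (-n) = Suc (nat (-(n+1)))" by simp
    then show ?thesis using False by (simp add: zit_def inv_eq[OF h] fg)
  qed
qed

lemma zit_pred: assumes h: "homeomorphism UNIV UNIV f g"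
  shows "zit f (n-1) x = g (zit f n x)"
proof -
  have gf: "\<And>y. g (f y) = y" using h by (auto simp: homeomorphism_def)
  have "zit f n x = f (zit f (n-1) x)" using zit_succ[OF h, of "n-1"] by simp
  then show ?thesis using gf by simp
qed

lemma zit_0[simp]: "zit f 0 x = x" by (simp add: zit_def)

lemma zit_add: assumes h: "homeomorphism UNIV UNIV f g"
  shows "zit f (m+n) x = zit f m (zit f n x)"
proof (induction m rule: int_induct[where k=0])
  case base then show ?case by simp
next
  case (step1 i) then show ?case using zit_succ[OF h, of "i+n"] zit_succ[OF h, of i]
    by (simp add: algebra_simps)
next
  case (step2 i) then show ?case using zit_pred[OF h, of "i+n"] zit_pred[OF h, of i]
    by (simp add: algebra_simps)
qed

lemma zit_nat: "zit f (int n) = f ^^ n" by (simp add: zit_def)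

lemma cont_funpow: "continuous_on UNIV (f::'a::topological_space \<Rightarrow> 'a) \<Longrightarrow> continuous_on UNIV (f ^^ n)"
proof (induction n)
  case 0 have "f ^^ 0 = id" by simp then show ?case using continuous_on_id' by metis
next
  case (Suc n)
  have "f ^^ Suc n = f \<circ> (f ^^ n)" by simp
  then show ?case using Suc continuous_on_compose[of UNIV "f ^^ n" f]
    by (metis continuous_on_subset subset_UNIV)
qed

lemma zit_cont: assumes h: "homeomorphism UNIV UNIV f g"
  shows "continuous_on UNIV (zit f n)"
  using h cont_funpow unfolding zit_def inv_eq[OF h] homeomorphism_def by auto

lemma zit_mult_period: assumes h: "homeomorphism UNIV UNIV f g" and p: "zit f k p = p"
  shows "zit f (k * j) p = p"
proof (induction j rule: int_induct[where k=0])
  case base then show ?case by simp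
next
  case (step1 i) then show ?case using zit_add[OF h, of k "k*i" p] p by (simp add: algebra_simps)
next
  case (step2 i)
  have "zit f k (zit f (k*(i-1)) p) = zit f (k*i) p" using zit_add[OF h, of k "k*(i-1)" p] by (simp add: algebra_simps)
  then have "zit f (-k) (zit f k (zit f (k*(i-1)) p)) = zit f (-k) p" using step2 by simp
  moreover have "zit f (-k) p = p" using zit_add[OF h, of "-k" k p] p by simp
  ultimately show ?case using zit_add[OF h, of "-k" k] by simp
qed

lemma L1:
  fixes \<N> :: "'a::metric_space set set"
  assumes "compact (UNIV::'a set)" "countable \<N>" "\<forall>N\<in>\<N>. nowhere_dense N" "\<Union>\<N> = UNIV"
  shows False
proof -
  have cs: "compact_space (euclidean::'a topology)" using assms(1) by (simp add: compact_space_def)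
  have "euclidean interior_of \<Union>(closure ` \<N>) = {}"
    apply (rule Baire_category_alt)
    using assms cs compact_imp_locally_compact_space regular_space_euclidean
    by (auto simp: nowhere_dense_def)
  moreover have "\<Union>(closure ` \<N>) = UNIV" using assms(4) closure_subset by blast
  ultimately show False by simp
qed

lemma L2:
  fixes M :: "'a::metric_space set"
  assumes "compact M" "M \<noteq> {}" "countable M"
  shows "\<exists>p\<in>M. \<exists>V. open V \<and> V \<inter> M = {p}"
proof (rule ccontr)
  assume H: "\<not> ?thesis"
  have cs: "compact_space (top_of_set M)" using assms(1) by (simp add: compact_space_subtopology)
  have "(top_of_set M) interior_of \<Union>((\<lambda>m. {m}) ` M) = {}"
  proof (rule Baire_category_alt)
    show "completely_metrizable_space (top_of_set M) \<or> locally_compact_space (top_of_set M) \<and> regular_space (top_of_set M)"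
      using cs compact_imp_locally_compact_space regular_space_euclidean regular_space_subtopology by blast
    show "countable ((\<lambda>m. {m}) ` M)" using assms(3) by simp
    fix T assume "T \<in> (\<lambda>m. {m}) ` M"
    then obtain m where m: "m \<in> M" "T = {m}" by auto
    have "closedin (top_of_set M) {m}" using m by (simp add: closedin_closed_subtopology)
    moreover have "(top_of_set M) interior_of {m} = {}"
    proof (rule ccontr)
      assume "(top_of_set M) interior_of {m} \<noteq> {}"
      then have "(top_of_set M) interior_of {m} = {m}"
        using interior_of_subset by fastforce
      then have "openin (top_of_set M) {m}" by (metis openin_interior_of)
      then obtain V where "open V" "{m} = M \<inter> V" by (auto simp: openin_open)
      then show False using H m by auto
    qed
    ultimately show "closedin (top_of_set M) T \<and> (top_of_set M) interior_of T = {}" using m by simp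
  qed
  moreover have "\<Union>((\<lambda>m. {m}) ` M) = M" by auto
  ultimately show False using assms(2) by (simp add: interior_of_openin)
qed

lemma L3:
  fixes \<A> :: "'a::metric_space set set"
  assumes "compact (UNIV::'a set)" "countable \<A>" "\<forall>A\<in>\<A>. \<exists>B. meagre B \<and> A \<subseteq> B" "\<Union>\<A> = UNIV"
  shows False
proof -
  have ex: "\<forall>A\<in>\<A>. \<exists>\<N>. countable \<N> \<and> (\<forall>N\<in>\<N>. nowhere_dense N) \<and> A \<subseteq> \<Union>\<N>"
  proof
    fix A assume "A \<in> \<A>"
    then obtain B where "meagre B" "A \<subseteq> B" using assms(3) by blast
    then obtain \<N> where "countable \<N>" "\<forall>N\<in>\<N>. nowhere_dense N" "B = \<Union>\<N>" unfolding meagre_def by blast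
    then show "\<exists>\<N>. countable \<N> \<and> (\<forall>N\<in>\<N>. nowhere_dense N) \<and> A \<subseteq> \<Union>\<N>" using \<open>A \<subseteq> B\<close> by blast
  qed
  obtain NN where NN: "\<And>A. A\<in>\<A> \<Longrightarrow> countable (NN A) \<and> (\<forall>N\<in>NN A. nowhere_dense N) \<and> A \<subseteq> \<Union>(NN A)"
  proof -
    from bchoice[OF ex] obtain h where "\<forall>A\<in>\<A>. countable (h A) \<and> (\<forall>N\<in>h A. nowhere_dense N) \<and> A \<subseteq> \<Union>(h A)" by (elim exE)
    then show ?thesis by (intro that[of h]) auto
  qed
  define \<N> where "\<N> = (\<Union>A\<in>\<A>. (\<lambda>N. N \<inter> A) ` NN A)"
  have "countable \<N>" unfolding \<N>_def using assms(2) NN by (intro countable_UN) auto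
  moreover have "\<forall>N\<in>\<N>. nowhere_dense N"
  proof
    fix N assume "N \<in> \<N>"
    then obtain A N0 where "A \<in> \<A>" "N0 \<in> NN A" "N = N0 \<inter> A" unfolding \<N>_def by auto
    then have "nowhere_dense N0" using NN by auto
    moreover have "interior (closure N) \<subseteq> interior (closure N0)"
      using \<open>N = N0 \<inter> A\<close> by (simp add: closure_mono interior_mono)
    ultimately show "nowhere_dense N" unfolding nowhere_dense_def by auto
  qed
  moreover have "\<Union>\<N> = UNIV"
  proof -
    have "A \<subseteq> \<Union>\<N>" if A_in: "A \<in> \<A>" for A
    proof
      fix x assume "x \<in> A"
      then obtain N where "N \<in> NN A" "x \<in> N" using NN[OF A_in] by blast
      then have "x \<in> N \<inter> A" "N \<inter> A \<in> \<N>" using \<open>x \<in> A\<close> A_in unfolding \<N>_def by auto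
      then show "x \<in> \<Union>\<N>" by blast
    qed
    then show ?thesis using assms(4) by blast
  qed
  ultimately show False using L1[OF assms(1)] by metis
qed

lemma INF_zero_iff:
  fixes g :: "int \<Rightarrow> real"
  assumes "\<And>n. g n \<ge> 0"
  shows "(INF n\<in>UNIV. g n) = 0 \<longleftrightarrow> (\<forall>e>0. \<exists>n. g n < e)"
proof
  have bdd: "bdd_below (range g)" using assms by (intro bdd_belowI[of _ 0]) auto
  assume "(INF n\<in>UNIV. g n) = 0"
  then show "\<forall>e>0. \<exists>n. g n < e" using cINF_less_iff[of UNIV g] bdd by auto
next
  have bdd: "bdd_below (range g)" using assms by (intro bdd_belowI[of _ 0]) auto
  assume H: "\<forall>e>0. \<exists>n. g n < e"
  have ge: "(INF n\<in>UNIV. g n) \<ge> 0" using assms by (intro cINF_greatest) auto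
  show "(INF n\<in>UNIV. g n) = 0"
  proof (rule ccontr)
    assume "(INF n\<in>UNIV. g n) \<noteq> 0"
    then have "(INF n\<in>UNIV. g n) > 0" using ge by simp
    then obtain n where "g n < (INF n\<in>UNIV. g n)" using H by blast
    moreover have "(INF n\<in>UNIV. g n) \<le> g n" using cINF_lower[OF bdd] by simp
    ultimately show False by simp
  qed
qed

lemma prox_iff: "y \<in> proximal_cell f x \<longleftrightarrow> (\<forall>e>0. \<exists>n. dist (zit f n x) (zit f n y) < e)"
  unfolding proximal_cell_def using INF_zero_iff[of "\<lambda>n. dist (zit f n x) (zit f n y)"] by simp

lemma stable_sub: "stable_class f x \<subseteq> proximal_cell f x"
proof
  fix y assume "y \<in> stable_class f x"
  then have L: "(\<lambda>n. dist ((f ^^ n) x) ((f ^^ n) y)) \<longlonglongrightarrow> 0" by (simp add: stable_class_def)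
  show "y \<in> proximal_cell f x" unfolding prox_iff
  proof (intro allI impI)
    fix e :: real assume "e > 0"
    then obtain N where "\<forall>n\<ge>N. dist (dist ((f ^^ n) x) ((f ^^ n) y)) 0 < e"
      using L unfolding LIMSEQ_def by blast
    then have "dist ((f ^^ N) x) ((f ^^ N) y) < e" by auto
    then show "\<exists>n. dist (zit f n x) (zit f n y) < e" using zit_nat[of f N] by (metis)
  qed
qed

definition orb :: "('a \<Rightarrow> 'a) \<Rightarrow> 'a \<Rightarrow> 'a set" where
  "orb f y = range (\<lambda>n. zit f n y)"

definition invar :: "('a \<Rightarrow> 'a) \<Rightarrow> 'a set \<Rightarrow> bool" where
  "invar f S \<longleftrightarrow> (\<forall>x\<in>S. \<forall>n. zit f n x \<in> S)"

lemma orb_self: "y \<in> orb f y"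
  unfolding orb_def by (metis rangeI zit_0)

lemma closure_orb_invar:
  fixes f :: "'a::metric_space \<Rightarrow> 'a"
  assumes h: "homeomorphism UNIV UNIV f g"
  shows "invar f (closure (orb f y))"
  unfolding invar_def
proof (intro ballI allI)
  fix x n assume x: "x \<in> closure (orb f y)"
  have "zit f n ` orb f y \<subseteq> orb f y"
    unfolding orb_def using zit_add[OF h, of n _ y, symmetric] by auto
  then have "zit f n ` (closure (orb f y)) \<subseteq> closure (orb f y)"
    using image_closure_subset[of "orb f y" "zit f n" "closure (orb f y)"]
      zit_cont[OF h, of n] continuous_on_subset closure_subset by blast
  then show "zit f n x \<in> closure (orb f y)" using x by blast
qed

lemma finite_chain_min:
  assumes "finite F" "F \<noteq> {}" "\<forall>X\<in>F. \<forall>Y\<in>F. X \<subseteq> Y \<or> Y \<subseteq> X"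
  shows "\<exists>X\<in>F. \<forall>Y\<in>F. X \<subseteq> Y"
  using assms
proof (induction F rule: finite_ne_induct)
  case (singleton x) then show ?case by auto
next
  case (insert x F)
  then obtain X where X: "X \<in> F" "\<forall>Y\<in>F. X \<subseteq> Y" by auto
  show ?case
  proof (cases "x \<subseteq> X")
    case True then show ?thesis using X by auto
  next
    case False then have "X \<subseteq> x" using insert.prems X by auto
    then show ?thesis using X by auto
  qed
qed

lemma minimal_exists:
  fixes f :: "'a::metric_space \<Rightarrow> 'a"
  assumes cU: "compact (UNIV::'a set)"
    and K: "closed K" "K \<noteq> {}" "invar f K"
  shows "\<exists>M. M \<subseteq> K \<and> closed M \<and> M \<noteq> {} \<and> invar f M \<and>
           (\<forall>S. S \<subseteq> M \<and> closed S \<and> S \<noteq> {} \<and> invar f S \<longrightarrow> S = M)"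
proof -
  define Fam where "Fam = {S. S \<subseteq> K \<and> closed S \<and> S \<noteq> {} \<and> invar f S}"
  define A where "A = uminus ` Fam"
  have "\<exists>N\<in>A. \<forall>X\<in>A. N \<subseteq> X \<longrightarrow> X = N"
  proof (rule Zorn_Lemma2, intro ballI)
    fix C assume C: "C \<in> chains A"
    then have CA: "C \<subseteq> A" and ch: "\<forall>X\<in>C. \<forall>Y\<in>C. X \<subseteq> Y \<or> Y \<subseteq> X"
      unfolding chains_def chain_subset_def by auto
    show "\<exists>U\<in>A. \<forall>X\<in>C. X \<subseteq> U"
    proof (cases "C = {}")
      case True
      have "- K \<in> A" unfolding A_def Fam_def using K by auto
      then show ?thesis using True by auto
    next
      case False
      define D where "D = uminus ` C"
      have DF: "D \<subseteq> Fam" using CA unfolding D_def A_def by auto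
      have chD: "\<forall>X\<in>D. \<forall>Y\<in>D. X \<subseteq> Y \<or> Y \<subseteq> X" using ch unfolding D_def by auto
      have "UNIV \<inter> \<Inter>D \<noteq> {}"
      proof (rule compact_imp_fip[OF cU])
        show "\<And>T. T \<in> D \<Longrightarrow> closed T" using DF unfolding Fam_def by auto
        fix D' assume D': "finite D'" "D' \<subseteq> D"
        show "UNIV \<inter> \<Inter>D' \<noteq> {}"
        proof (cases "D' = {}")
          case True then show ?thesis by simp
        next
          case False
          then obtain X where "X \<in> D'" "\<forall>Y\<in>D'. X \<subseteq> Y"
            using finite_chain_min[OF D'(1) False] chD D'(2) by (meson subsetD)
          then have "\<Inter>D' = X" by auto
          moreover have "X \<noteq> {}" using \<open>X \<in> D'\<close> D'(2) DF unfolding Fam_def by auto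
          ultimately show ?thesis by simp
        qed
      qed
      moreover have "\<Inter>D \<subseteq> K" using DF False unfolding D_def Fam_def by auto
      moreover have "closed (\<Inter>D)" using DF unfolding Fam_def by auto
      moreover have "invar f (\<Inter>D)" using DF unfolding Fam_def invar_def by auto
      ultimately have "\<Inter>D \<in> Fam" unfolding Fam_def by auto
      then have "- \<Inter>D \<in> A" unfolding A_def by auto
      moreover have "\<forall>X\<in>C. X \<subseteq> - \<Inter>D" unfolding D_def by auto
      ultimately show ?thesis by blast
    qed
  qed
  then obtain N where N: "N \<in> A" "\<forall>X\<in>A. N \<subseteq> X \<longrightarrow> X = N" by blast
  define M where "M = - N"
  have "M \<in> Fam" using N(1) unfolding M_def A_def by auto
  moreover have "\<forall>S. S \<subseteq> M \<and> closed S \<and> S \<noteq> {} \<and> invar f S \<longrightarrow> S = M"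
  proof (intro allI impI)
    fix S assume S: "S \<subseteq> M \<and> closed S \<and> S \<noteq> {} \<and> invar f S"
    then have "S \<in> Fam" using \<open>M \<in> Fam\<close> unfolding Fam_def by auto
    then have "- S \<in> A" unfolding A_def by auto
    moreover have "N \<subseteq> - S" using S unfolding M_def by auto
    ultimately have "- S = N" using N(2) by auto
    then show "S = M" unfolding M_def by auto
  qed
  ultimately show ?thesis unfolding Fam_def by auto
qed

definition minset :: "('a::metric_space \<Rightarrow> 'a) \<Rightarrow> 'a set \<Rightarrow> bool" where
  "minset f M \<longleftrightarrow> closed M \<and> M \<noteq> {} \<and> invar f M \<and>
           (\<forall>S. S \<subseteq> M \<and> closed S \<and> S \<noteq> {} \<and> invar f S \<longrightarrow> S = M)"

lemma minset_dense:
  fixes f :: "'a::metric_space \<Rightarrow> 'a"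
  assumes h: "homeomorphism UNIV UNIV f g" and M: "minset f M" and q: "q \<in> M"
  shows "M \<subseteq> closure (orb f q)"
proof -
  have "orb f q \<subseteq> M" using M q unfolding minset_def invar_def orb_def by auto
  then have "closure (orb f q) \<subseteq> M" using M unfolding minset_def by (simp add: closure_minimal)
  moreover have "closure (orb f q) \<noteq> {}" using orb_self[of q f] closure_subset by blast
  ultimately have "closure (orb f q) = M" using M closure_orb_invar[OF h, of q] unfolding minset_def by auto
  then show ?thesis by simp
qed

lemma minset_hits:
  fixes f :: "'a::metric_space \<Rightarrow> 'a"
  assumes h: "homeomorphism UNIV UNIV f g" and M: "minset f M" and q: "q \<in> M" and m: "m \<in> M"
    and U: "open U" "q \<in> U"
  shows "\<exists>n. zit f n m \<in> U"
proof -
  have "q \<in> closure (orb f m)" using minset_dense[OF h M m] q by auto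
  then have "U \<inter> orb f m \<noteq> {}" using U open_Int_closure_eq_empty by blast
  then show ?thesis unfolding orb_def by auto
qed

lemma minset_AP:
  fixes f :: "'a::metric_space \<Rightarrow> 'a"
  assumes cU: "compact (UNIV::'a set)" and h: "homeomorphism UNIV UNIV f g" and M: "minset f M" and q: "q \<in> M"
  shows "almost_periodic f q"
  unfolding almost_periodic_def
proof (intro allI impI)
  fix U assume U: "open U \<and> q \<in> U"
  have cM: "compact M" using compact_Int_closed[OF cU, of M] M unfolding minset_def by simp
  have cov: "M \<subseteq> (\<Union>n\<in>UNIV. zit f n -` U)"
  proof
    fix m assume "m \<in> M"
    then obtain n where "zit f n m \<in> U" using minset_hits[OF h M q] U by blast
    then show "m \<in> (\<Union>n\<in>UNIV. zit f n -` U)" by blast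
  qed
  have opn: "\<And>n. n \<in> UNIV \<Longrightarrow> open (zit f n -` U)"
  proof -
    fix n :: int
    show "open (zit f n -` U)" using open_vimage[of U "zit f n"] U zit_cont[OF h, of n] by blast
  qed
  obtain C where C: "C \<subseteq> UNIV" "finite C" "M \<subseteq> (\<Union>n\<in>C. zit f n -` U)"
    by (rule compactE_image[OF cM opn cov])
  show "syndetic {n. zit f n q \<in> U}" unfolding syndetic_def
  proof (intro exI conjI)
    show "finite (uminus ` C)" using C(2) by simp
    show "{a + b |a b. a \<in> {n. zit f n q \<in> U} \<and> b \<in> uminus ` C} = UNIV"
    proof (intro set_eqI iffI)
      fix t :: int
      have "zit f t q \<in> M" using M q unfolding minset_def invar_def by auto
      then obtain c where c: "c \<in> C" "zit f c (zit f t q) \<in> U" using C(3) by auto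
      then have "zit f (c + t) q \<in> U" using zit_add[OF h] by simp
      moreover have "t = (c + t) + (- c)" by simp
      ultimately show "t \<in> {a + b |a b. a \<in> {n. zit f n q \<in> U} \<and> b \<in> uminus ` C}" using c(1) by blast
    qed simp
  qed
qed

lemma minset_periodic:
  fixes f :: "'a::metric_space \<Rightarrow> 'a"
  assumes cU: "compact (UNIV::'a set)" and h: "homeomorphism UNIV UNIV f g" and M: "minset f M"
    and cnt: "countable M"
  shows "\<exists>p\<in>M. \<exists>k>0. zit f k p = p"
proof -
  have cM: "compact M" using compact_Int_closed[OF cU, of M] M unfolding minset_def by simp
  obtain p V where p: "p \<in> M" "open V" "V \<inter> M = {p}"
    using L2[OF cM _ cnt] M unfolding minset_def by blast
  define s where "s n = zit f (int n) p" for n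
  have sM: "\<And>n. s n \<in> M" using M p unfolding minset_def invar_def s_def by auto
  obtain l r where l: "l \<in> M" "strict_mono r" "(s \<circ> r) \<longlonglongrightarrow> l"
    using seq_compactE[OF compact_imp_seq_compact[OF cM], of s] sM by blast
  obtain j where j: "zit f j l \<in> V" using minset_hits[OF h M p(1) l(1) p(2)] p(3) by blast
  have "isCont (zit f j) l" using zit_cont[OF h, of j] by (simp add: continuous_on_eq_continuous_at)
  then have "((\<lambda>n. zit f j ((s \<circ> r) n)) \<longlonglongrightarrow> zit f j l)" using l(3) isCont_tendsto_compose by blast
  then have "eventually (\<lambda>n. zit f j ((s \<circ> r) n) \<in> V) sequentially"
    using topological_tendstoD p(2) j by blast
  then obtain N where N: "\<And>n. n \<ge> N \<Longrightarrow> zit f j ((s \<circ> r) n) \<in> V" unfolding eventually_sequentially by blast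
  have e: "zit f (j + int (r n)) p = p" if "n \<ge> N" for n
  proof -
    have "zit f j ((s \<circ> r) n) \<in> V \<inter> M" using N[OF that] sM M unfolding minset_def invar_def by auto
    then have "zit f j ((s \<circ> r) n) = p" using p(3) by auto
    then show ?thesis using zit_add[OF h] unfolding s_def by simp
  qed
  define k where "k = int (r (Suc N)) - int (r N)"
  have "k > 0" using l(2) unfolding k_def strict_mono_def by simp
  moreover have "zit f k p = p"
  proof -
    have "zit f k p = zit f k (zit f (j + int (r N)) p)" using e[of N] by simp
    also have "\<dots> = zit f (j + int (r (Suc N))) p" using zit_add[OF h, symmetric] unfolding k_def by (simp add: algebra_simps)
    also have "\<dots> = p" using e[of "Suc N"] by simp
    finally show ?thesis .
  qed
  ultimately show ?thesis using p(1) by blast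
qed

lemma prox_periodic:
  fixes f :: "'a::metric_space \<Rightarrow> 'a"
  assumes h: "homeomorphism UNIV UNIV f g" and k: "k > 0" and p: "zit f k p = p"
    and y: "p \<in> closure (orb f y)"
  shows "\<exists>r\<in>{0..<k}. y \<in> proximal_cell f (zit f (-r) p)"
proof (rule ccontr)
  assume H: "\<not> ?thesis"
  have "\<forall>r\<in>{0..<k}. \<exists>e>0. \<forall>n. e \<le> dist (zit f n (zit f (-r) p)) (zit f n y)"
  proof
    fix r assume "r \<in> {0..<k}"
    then have "\<not> (\<forall>e>0. \<exists>n. dist (zit f n (zit f (-r) p)) (zit f n y) < e)"
      using H prox_iff by blast
    then show "\<exists>e>0. \<forall>n. e \<le> dist (zit f n (zit f (-r) p)) (zit f n y)"
      by (meson not_le)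
  qed
  then obtain e where e: "\<And>r. r \<in> {0..<k} \<Longrightarrow> e r > 0 \<and> (\<forall>n. e r \<le> dist (zit f n (zit f (-r) p)) (zit f n y))"
    using bchoice by metis
  define \<epsilon> where "\<epsilon> = Min (e ` {0..<k})"
  have fin: "finite (e ` {0..<k})" by simp
  have ne: "e ` {0..<k} \<noteq> {}" using k by simp
  have "\<epsilon> > 0" unfolding \<epsilon>_def using e fin ne by (subst Min_gr_iff) auto
  then obtain z where z: "z \<in> orb f y" "dist z p < \<epsilon>" using y closure_approachable by blast
  then obtain n where n: "z = zit f n y" unfolding orb_def by auto
  define r where "r = n mod k"
  have r: "r \<in> {0..<k}" unfolding r_def using k by simp
  have "zit f n (zit f (-r) p) = zit f (k * (n div k)) p"
    using zit_add[OF h, of n "-r" p, symmetric] unfolding r_def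
    by (metis add.commute diff_conv_add_uminus minus_mod_eq_mult_div mult.commute)
  also have "\<dots> = p" using zit_mult_period[OF h p] by simp
  finally have "dist (zit f n (zit f (-r) p)) (zit f n y) < \<epsilon>" using z n by (simp add: dist_commute)
  moreover have "\<epsilon> \<le> e r" unfolding \<epsilon>_def using fin r by simp
  moreover have "e r \<le> dist (zit f n (zit f (-r) p)) (zit f n y)" using e[OF r] by blast
  ultimately show False by linarith
qed

lemma every_point_prox:
  fixes f :: "'a::metric_space \<Rightarrow> 'a"
  assumes cU: "compact (UNIV::'a set)" and h: "homeomorphism UNIV UNIV f g"
    and cnt: "countable {x. almost_periodic f x}"
  shows "\<exists>q. almost_periodic f q \<and> y \<in> proximal_cell f q"
proof -
  define K where "K = closure (orb f y)"
  have K: "closed K" "K \<noteq> {}" "invar f K"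
    unfolding K_def using closure_orb_invar[OF h] orb_self[of y f] closure_subset by auto
  obtain M where "M \<subseteq> K" and Mm: "minset f M"
    using minimal_exists[OF cU K] unfolding minset_def by blast
  have MAP: "M \<subseteq> {x. almost_periodic f x}" using minset_AP[OF cU h Mm] by blast
  then have "countable M" using cnt countable_subset by blast
  then obtain p k where p: "p \<in> M" "k > 0" "zit f k p = p" using minset_periodic[OF cU h Mm] by blast
  have "p \<in> closure (orb f y)" using p(1) \<open>M \<subseteq> K\<close> K_def by auto
  then obtain r where "y \<in> proximal_cell f (zit f (-r) p)" using prox_periodic[OF h p(2,3)] by blast
  moreover have "zit f (-r) p \<in> M" using Mm p(1) unfolding minset_def invar_def by auto
  ultimately show ?thesis using MAP by blast
qed

theorem theorem2p17:
  fixes f :: "'a::metric_space \<Rightarrow> 'a"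
  assumes "compact (UNIV :: 'a set)"
    and "\<exists>g. homeomorphism UNIV UNIV f g"
    and "inner_distal f"
    and "\<forall>x. meagre (proximal_cell f x)"
  shows "uncountable {x. almost_periodic f x} \<and> uncountable (range (stable_class f))"
proof
  obtain g where h: "homeomorphism UNIV UNIV f g" using assms(2) by blast
  show "uncountable {x. almost_periodic f x}"
  proof
    assume cnt: "countable {x. almost_periodic f x}"
    show False
    proof (rule L3[OF assms(1)])
      show "countable (proximal_cell f ` {x. almost_periodic f x})" using cnt by simp
      show "\<forall>A\<in>proximal_cell f ` {x. almost_periodic f x}. \<exists>B. meagre B \<and> A \<subseteq> B"
        using assms(4) by blast
      show "\<Union>(proximal_cell f ` {x. almost_periodic f x}) = UNIV"
        using every_point_prox[OF assms(1) h cnt] by blast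
    qed
  qed
  show "uncountable (range (stable_class f))"
  proof
    assume cnt: "countable (range (stable_class f))"
    show False
    proof (rule L3[OF assms(1) cnt])
      show "\<forall>A\<in>range (stable_class f). \<exists>B. meagre B \<and> A \<subseteq> B"
        using assms(4) stable_sub by blast
      have "x \<in> stable_class f x" for x by (simp add: stable_class_def)
      then show "\<Union>(range (stable_class f)) = UNIV" by blast
    qed
  qed
qed

end
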